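(* Let $n\ge1$, $\mathcal{D}=\{u\in(0,1)^n:\sum_{i=1}^nu_i<1\}$, $u_0=1-\sum_{i=1}^nu_i$, and let $q_{ij}\ge0$, $r_{ij}=r_{ji}\ge0$ ($i,j=0,\ldots,n$) be constants with $q_{i0}=q_{0i}=r_{i0}=r_{ii}=0$. Define $q_i(u)=\sum_{j=1}^nq_{ij}u_j$, $r_i(u)=\sum_{j=1}^nr_{ij}u_j$ and, for $i,j=1,\ldots,n$, $$A_{ij}(u)=(q_i(u)-r_i(u))\delta_{ij}+u_i\Big(q_{ij}-q_j(u)+r_{ij}+r_j(u)-\sum_{\ell=1}^nu_\ell(q_{\ell j}+r_{\ell j})\Big),$$ $$(h_B''(u))_{ij}=\frac{\delta_{ij}}{u_i}+\frac1{u_0}.$$ Assume the symmetric part of $(q_{ij}+r_{ij})_{i,j=1}^n$ is positive definite with smallest eigenvalue $\alpha>0$ and $q_{ij}\ge r_{ij}$ for $i,j=1,\ldots,n$. Then $z^Th_B''(u)A(u)z\ge\alpha|z|^2$ for all $u\in\mathcal{D}$ and $z\in\mathbb{R}^n$.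
   Context: $A(u)$ is the diffusion matrix of the multiphase cross-diffusion system with unit drag coefficients written in the variables $u_1,\ldots,u_n$, and $h_B''(u)$ is the Hessian of the Boltzmann entropy density $h_B(u)=\sum_{i=0}^nu_i(\log u_i-1)$ with $u_0=1-\sum_{i=1}^nu_i$. *)

theory Defs
  imports "HOL-Analysis.Analysis"
begin

text \<open>Indices 1..n are modelled by a finite type 'n; index 0 is eliminated via u0.\<close>

definition u0 :: "real^'n \<Rightarrow> real" where
  "u0 u = 1 - (\<Sum>i\<in>UNIV. u $ i)"

definition domD :: "(real^'n) set" where
  "domD = {u. (\<forall>i. 0 < u $ i \<and> u $ i < 1) \<and> (\<Sum>i\<in>UNIV. u $ i) < 1}"

definition qfun :: "real^'n^'n \<Rightarrow> real^'n \<Rightarrow> 'n \<Rightarrow> real" where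
  "qfun q u i = (\<Sum>j\<in>UNIV. q $ i $ j * u $ j)"

definition diffA :: "real^'n^'n \<Rightarrow> real^'n^'n \<Rightarrow> real^'n \<Rightarrow> real^'n^'n" where
  "diffA q r u = (\<chi> i j.
     (if i = j then qfun q u i - qfun r u i else 0)
     + u $ i * (q $ i $ j - qfun q u j + r $ i $ j + qfun r u j
               - (\<Sum>l\<in>UNIV. u $ l * (q $ l $ j + r $ l $ j))))"

definition hessB :: "real^'n \<Rightarrow> real^'n^'n" where
  "hessB u = (\<chi> i j. (if i = j then 1 / u $ i else 0) + 1 / u0 u)"

definition pos_def :: "real^'n^'n \<Rightarrow> bool" where
  "pos_def M \<longleftrightarrow> (\<forall>x. x \<noteq> 0 \<longrightarrow> x \<bullet> (M *v x) > 0)"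

definition is_eigenvalue :: "real^'n^'n \<Rightarrow> real \<Rightarrow> bool" where
  "is_eigenvalue M c \<longleftrightarrow> (\<exists>v. v \<noteq> 0 \<and> M *v v = c *\<^sub>R v)"

definition smallest_eigenvalue :: "real^'n^'n \<Rightarrow> real \<Rightarrow> bool" where
  "smallest_eigenvalue M c \<longleftrightarrow> is_eigenvalue M c \<and> (\<forall>d. is_eigenvalue M d \<longrightarrow> c \<le> d)"

definition sym_part :: "real^'n^'n \<Rightarrow> real^'n^'n" where
  "sym_part M = (1/2) *\<^sub>R (M + transpose M)"

end

theory Submission
  imports Defs
begin

lemma quad_zero:
  fixes a b :: real
  assumes "\<And>t. 0 \<le> b * t + a * t^2"
  shows "b = 0"
proof (rule ccontr)
  assume nz: "b \<noteq> 0"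
  define t where "t = - b / (2 * (\<bar>a\<bar> + 1))"
  have pos: "\<bar>a\<bar> + 1 > 0" by simp
  have "b * t = - (b^2 / (2 * (\<bar>a\<bar> + 1)))" unfolding t_def by (simp add: power2_eq_square)
  moreover have "a * t^2 \<le> \<bar>a\<bar> * b^2 / (4 * (\<bar>a\<bar> + 1)^2)"
  proof -
    have "a * t^2 = a * (b^2 / (4 * (\<bar>a\<bar> + 1)^2))"
      unfolding t_def by (simp add: power_divide power_mult_distrib power2_eq_square algebra_simps)
    also have "\<dots> \<le> \<bar>a\<bar> * (b^2 / (4 * (\<bar>a\<bar> + 1)^2))"
      by (intro mult_right_mono) auto
    finally show ?thesis by simp
  qed
  moreover have "\<bar>a\<bar> * b^2 / (4 * (\<bar>a\<bar> + 1)^2) < b^2 / (2 * (\<bar>a\<bar> + 1))"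
  proof -
    have b2: "b^2 > 0" using nz by simp
    have "\<bar>a\<bar> * b^2 / (4 * (\<bar>a\<bar> + 1)^2) = (\<bar>a\<bar> / (2*(\<bar>a\<bar> + 1))) * (b^2 / (2 * (\<bar>a\<bar> + 1)))"
      by (simp add: power2_eq_square field_simps)
    also have "\<dots> < 1 * (b^2 / (2 * (\<bar>a\<bar> + 1)))"
      using b2 pos by (intro mult_strict_right_mono) auto
    finally show ?thesis by simp
  qed
  ultimately have "b * t + a * t^2 < 0" by linarith
  with assms[of t] show False by linarith
qed

lemma sym_inner:
  fixes S :: "real^'n^'n"
  assumes sym: "\<And>i j. S$i$j = S$j$i"
  shows "v \<bullet> (S *v w) = w \<bullet> (S *v v)"
proof -
  have T: "transpose S = S" using sym by (simp add: vec_eq_iff transpose_def)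
  have "w \<bullet> (S *v v) = (w v* S) \<bullet> v" by (simp add: dot_lmul_matrix)
  also have "w v* S = transpose S *v w" by simp
  also have "\<dots> = S *v w" using T by simp
  finally show ?thesis by (simp add: inner_commute)
qed

lemma rayleigh:
  fixes S :: "real^'n^'n"
  assumes sym: "\<And>i j. S$i$j = S$j$i" and ev: "smallest_eigenvalue S a"
  shows "x \<bullet> (S *v x) \<ge> a * (norm x)^2"
proof -
  let ?f = "\<lambda>x. x \<bullet> (S *v x)"
  have cont: "continuous_on (sphere 0 1) ?f"
    by (intro continuous_intros linear_continuous_on linear_linear[THEN iffD1] matrix_vector_mul_linear)
  have ne: "sphere (0::real^'n) 1 \<noteq> {}"
    using vector_choose_size[of 1] by (auto simp: sphere_def)
  obtain v where v: "v \<in> sphere 0 1" and vmin: "\<And>y. y \<in> sphere 0 1 \<Longrightarrow> ?f v \<le> ?f y"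
    using continuous_attains_inf[OF compact_sphere ne cont] by blast
  define m where "m = ?f v"
  have nv: "norm v = 1" using v by simp
  have bound: "?f x \<ge> m * (norm x)^2" for x
  proof (cases "x = 0")
    case True then show ?thesis by simp
  next
    case False
    define y where "y = (1 / norm x) *\<^sub>R x"
    have y: "y \<in> sphere 0 1" using False by (simp add: y_def)
    have xy: "x = norm x *\<^sub>R y" using False by (simp add: y_def)
    have "?f x = (norm x)^2 * ?f y"
      by (subst (1 2) xy) (simp add: matrix_vector_mult_scaleR power2_eq_square)
    moreover have "m \<le> ?f y" using vmin[OF y] by (simp add: m_def)
    ultimately show ?thesis by (simp add: mult.commute mult_right_mono)
  qed
  have key: "w \<bullet> (S *v v - m *\<^sub>R v) = 0" for w
  proof -
    have "0 \<le> (2 * (w \<bullet> (S *v v - m *\<^sub>R v))) * t + (?f w - m * (norm w)^2) * t^2" for t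
    proof -
      have "m * (norm (v + t *\<^sub>R w))^2 \<le> ?f (v + t *\<^sub>R w)" by (rule bound)
      moreover have "(norm (v + t *\<^sub>R w))^2 = 1 + 2 * t * (v \<bullet> w) + t^2 * (norm w)^2"
      proof -
        have vv: "v \<bullet> v = 1" using nv by (simp add: dot_square_norm)
        show ?thesis unfolding power2_norm_eq_inner
          by (simp add: inner_add vv inner_commute power2_eq_square algebra_simps)
      qed
      moreover have "?f (v + t *\<^sub>R w) = m + 2 * t * (w \<bullet> (S *v v)) + t^2 * ?f w"
        using sym_inner[OF sym, of v w]
        by (simp add: m_def matrix_vector_right_distrib matrix_vector_mult_scaleR inner_add power2_eq_square algebra_simps)
      ultimately show ?thesis
        by (simp add: inner_diff_right inner_commute algebra_simps)
    qed
    then show ?thesis using quad_zero by (metis mult_eq_0_iff zero_neq_numeral)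
  qed
  have "S *v v = m *\<^sub>R v" using key[of "S *v v - m *\<^sub>R v"] by simp
  moreover have "v \<noteq> 0" using nv by auto
  ultimately have "is_eigenvalue S m" unfolding is_eigenvalue_def by blast
  then have "a \<le> m" using ev unfolding smallest_eigenvalue_def by blast
  then have "a * (norm x)^2 \<le> m * (norm x)^2" by (simp add: mult_right_mono)
  then show ?thesis using bound[of x] by linarith
qed

lemma colsum:
  fixes q r :: "real^'n^'n"
  shows "(\<Sum>k\<in>UNIV. diffA q r u $ k $ j) = u0 u * (qfun q u j - qfun r u j + (\<Sum>l\<in>UNIV. u $ l * (q $ l $ j + r $ l $ j)))"
proof -
  define c where "c = qfun q u j - qfun r u j + (\<Sum>l\<in>UNIV. u $ l * (q $ l $ j + r $ l $ j))"
  have e: "diffA q r u $ k $ j = (if k = j then qfun q u j - qfun r u j else 0)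
     + u $ k * (q $ k $ j + r $ k $ j) - u $ k * c" for k
    by (simp add: diffA_def c_def algebra_simps)
  have "(\<Sum>k\<in>UNIV. diffA q r u $ k $ j) = (qfun q u j - qfun r u j) + (\<Sum>k\<in>UNIV. u $ k * (q $ k $ j + r $ k $ j)) - (\<Sum>k\<in>UNIV. u $ k) * c"
    unfolding e by (simp add: sum.distrib sum_subtractf sum_distrib_right)
  also have "\<dots> = u0 u * c" by (simp add: u0_def c_def algebra_simps)
  finally show ?thesis by (simp add: c_def)
qed

lemma entry:
  fixes q r :: "real^'n^'n"
  assumes u: "u \<in> domD"
  shows "(hessB u ** diffA q r u) $ i $ j = (if i = j then (qfun q u i - qfun r u i) / u $ i else 0) + q $ i $ j + r $ i $ j"
proof -
  have ui: "u $ i > 0" using u by (simp add: domD_def)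
  have u0: "u0 u > 0" using u by (simp add: domD_def u0_def)
  have "(hessB u ** diffA q r u) $ i $ j = (\<Sum>k\<in>UNIV. ((if i = k then 1 / u $ i else 0) + 1 / u0 u) * diffA q r u $ k $ j)"
    by (simp add: matrix_matrix_mult_def hessB_def)
  also have "\<dots> = diffA q r u $ i $ j / u $ i + (1 / u0 u) * (\<Sum>k\<in>UNIV. diffA q r u $ k $ j)"
  proof -
    have "((if i = k then 1 / u $ i else 0) + 1 / u0 u) * diffA q r u $ k $ j
        = (if k = i then diffA q r u $ i $ j / u $ i else 0) + (1 / u0 u) * diffA q r u $ k $ j" for k
      by (auto simp: distrib_right)
    then show ?thesis by (simp add: sum.distrib sum_distrib_left del: times_divide_eq_left times_divide_eq_right)
  qed
  also have "\<dots> = (if i = j then (qfun q u i - qfun r u i) / u $ i else 0) + q $ i $ j + r $ i $ j"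
    using ui u0 unfolding colsum by (cases "i = j") (simp_all add: diffA_def field_simps)
  finally show ?thesis .
qed

lemma sym_part_quad:
  fixes M :: "real^'n^'n"
  shows "z \<bullet> (sym_part M *v z) = z \<bullet> (M *v z)"
proof -
  have t: "z \<bullet> (transpose M *v z) = z \<bullet> (M *v z)"
  proof -
    have "z \<bullet> (transpose M *v z) = z \<bullet> (z v* M)" by simp
    also have "\<dots> = (z v* M) \<bullet> z" by (rule inner_commute)
    also have "\<dots> = z \<bullet> (M *v z)" by (rule dot_lmul_matrix)
    finally show ?thesis .
  qed
  show ?thesis unfolding sym_part_def
    by (simp add: scaleR_matrix_vector_assoc[symmetric] matrix_vector_mult_add_rdistrib inner_add_right t[simplified])
qed

theorem lemma8:
  fixes q r :: "real^'n^'n" and \<alpha> :: real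
  assumes q_nonneg: "\<And>i j. q $ i $ j \<ge> 0"
    and r_nonneg: "\<And>i j. r $ i $ j \<ge> 0"
    and r_sym: "\<And>i j. r $ i $ j = r $ j $ i"
    and r_diag: "\<And>i. r $ i $ i = 0"
    and posdef: "pos_def (sym_part (q + r))"
    and alpha: "smallest_eigenvalue (sym_part (q + r)) \<alpha>"
    and alpha_pos: "\<alpha> > 0"
    and q_ge_r: "\<And>i j. q $ i $ j \<ge> r $ i $ j"
    and u: "u \<in> domD"
  shows "z \<bullet> ((hessB u ** diffA q r u) *v z) \<ge> \<alpha> * (norm z)\<^sup>2"
proof -
  define d where "d i = (qfun q u i - qfun r u i) / u $ i" for i
  have dnn: "d i * (z $ i * z $ i) \<ge> 0" for i
  proof -
    have "qfun q u i - qfun r u i = (\<Sum>j\<in>UNIV. (q $ i $ j - r $ i $ j) * u $ j)"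
      by (simp add: qfun_def sum_subtractf left_diff_distrib)
    also have "\<dots> \<ge> 0" using u q_ge_r
      by (intro sum_nonneg mult_nonneg_nonneg) (auto simp: domD_def less_imp_le)
    finally have "d i \<ge> 0" using u by (simp add: d_def domD_def less_imp_le)
    then show ?thesis by simp
  qed
  have row: "(\<Sum>j\<in>UNIV. (hessB u ** diffA q r u) $ i $ j * z $ j) = d i * z $ i + (\<Sum>j\<in>UNIV. (q + r) $ i $ j * z $ j)" for i
  proof -
    have "(hessB u ** diffA q r u) $ i $ j * z $ j = (if j = i then d i * z $ i else 0) + (q + r) $ i $ j * z $ j" for j
      unfolding entry[OF u] d_def by (auto simp: algebra_simps)
    then show ?thesis by (simp add: sum.distrib)
  qed
  have "z \<bullet> ((hessB u ** diffA q r u) *v z) = (\<Sum>i\<in>UNIV. d i * (z $ i * z $ i)) + z \<bullet> ((q + r) *v z)"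
  proof -
    have ex: "z \<bullet> (X *v z) = (\<Sum>i\<in>UNIV. z $ i * (\<Sum>j\<in>UNIV. X $ i $ j * z $ j))" for X :: "real^'n^'n"
      unfolding inner_vec_def matrix_vector_mult_def by (simp add: inner_real_def)
    show ?thesis unfolding ex row by (simp add: distrib_left sum.distrib mult.left_commute)
  qed
  moreover have "(\<Sum>i\<in>UNIV. d i * (z $ i * z $ i)) \<ge> 0" by (intro sum_nonneg dnn)
  moreover have "z \<bullet> ((q + r) *v z) \<ge> \<alpha> * (norm z)\<^sup>2"
  proof -
    have "\<And>i j. sym_part (q + r) $ i $ j = sym_part (q + r) $ j $ i"
      by (simp add: sym_part_def transpose_def)
    from rayleigh[OF this alpha, of z] show ?thesis by (simp add: sym_part_quad)
  qed
  ultimately show ?thesis by linarith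
qed

end
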